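(* The target counital subalgebra of $H_\mathcal{C}$ is $$H_t(H_\mathcal{C})=\mathrm{span}\Big\{\sum_{k,b}\frac{\sqrt{d_k}}{\sqrt{d_a}}\,e^{ab}_{k;ab}\ :\ a\in Irr(\mathcal{C})\Big\}$$ (sum over $k,b$ with $(a,k,b)$ admissible). Moreover $\dim_\mathbb{C}H_t(H_\mathcal{C})=\dim_\mathbb{C}V_\mathbf{1}$, and $H_t(H_\mathcal{C})\cong V_\mathbf{1}$ as $H_\mathcal{C}$-modules; in particular $H_t(H_\mathcal{C})$ is simple.
   Context: $\mathcal{C}$ is a unitary fusion category, multiplicity free, whose simple objects are self-dual with trivial Frobenius–Schur indicators; $Irr(\mathcal{C})$ its simple objects, $d_a$ quantum dimensions, $(a,b,c)$ admissible iff $\mathrm{Hom}(a\otimes b,c)\ne0$; unitary $F$-symbols $F^{abc}_{d;nm}$ with trivalent vertices normalized so that $\theta(a,b,c)=\sqrt{d_ad_bd_c}$. $H_\mathcal{C}$ has basis $e^{ab}_{i;cd}$ ($(a,i,b)$, $(i,d,c)$ admissible), multiplication $e^{ab}_{i;cd}e^{a'b'}_{i';c'd'}=\frac{\delta_{c,a'}\delta_{d,b'}\delta_{i,i'}}{\sqrt{d_i}}e^{ab}_{i;c'd'}$, unit $\eta=\sum_{a,b,i}\sqrt{d_i}e^{ab}_{i;ab}$, counit $\varepsilon(e^{ab}_{i;cd})=\delta_{a,b}\delta_{c,d}\delta_{i,\mathbf{1}}$, comultiplication $\Delta(e^{ab}_{i;cd})=\sum_{j,k,p,q}\frac{\sqrt{d_jd_k}}{\sqrt{d_i}}F^{ajk}_{b;ip}F^{dkj}_{c;iq}e^{ap}_{j;cq}\otimes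 e^{pb}_{k;qd}$, antipode $S(e^{ab}_{i;cd})=\frac{\sqrt{d_bd_c}}{\sqrt{d_ad_d}}e^{dc}_{i;ba}$. The target counital map is $\varepsilon_t(h)=\varepsilon(\eta_{(1)}h)\eta_{(2)}$ and $H_t(H_\mathcal{C})=\varepsilon_t(H_\mathcal{C})$, an $H_\mathcal{C}$-module via $h\cdot z=\varepsilon_t(hz)$. For $i\in Irr(\mathcal{C})$, $V_i$ is the $H_\mathcal{C}$-module with basis $v^{ab}_i$ ($(a,i,b)$ admissible) and action $e^{ab}_{j;cd}\cdot v^{pq}_i=\frac{\delta_{i,j}\delta_{c,p}\delta_{d,q}}{\sqrt{d_i}}v^{ab}_i$. *)

theory Defs
  imports Complex_Main "HOL-Library.Function_Algebras"
begin

text \<open>Fsym C a b c d n m stands for F^{abc}_{d;nm},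
where (following the comultiplication formula) n labels the fusion channel of b and c
(with a n fusing to d) and m labels the fusion channel of a and b (with m c fusing to d).\<close>

record 'l fusion_data =
  lab :: "'l set"
  unit_lab :: 'l
  adm :: "'l \<Rightarrow> 'l \<Rightarrow> 'l \<Rightarrow> bool"
  qd :: "'l \<Rightarrow> real"
  Fsym :: "'l \<Rightarrow> 'l \<Rightarrow> 'l \<Rightarrow> 'l \<Rightarrow> 'l \<Rightarrow> 'l \<Rightarrow> complex"

definition umf_fusion :: "'l fusion_data \<Rightarrow> bool" where
  "umf_fusion C \<longleftrightarrow>
     finite (lab C) \<and> unit_lab C \<in> lab C \<and>
     (\<forall>a b c. adm C a b c \<longrightarrow> a \<in> lab C \<and> b \<in> lab C \<and> c \<in> lab C) \<and>
     (\<forall>a \<in> lab C. \<forall>b. adm C (unit_lab C) a b \<longleftrightarrow> a = b) \<and>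
     (\<forall>a \<in> lab C. \<forall>b. adm C a (unit_lab C) b \<longleftrightarrow> a = b) \<and>
     \<comment> \<open>self-duality of all simples: N_{ab}^c is symmetric in a, b, c\<close>
     (\<forall>a b c. adm C a b c \<longleftrightarrow> adm C b a c) \<and>
     (\<forall>a b c. adm C a b c \<longleftrightarrow> adm C a c b) \<and>
     \<comment> \<open>associativity of the fusion rules\<close>
     (\<forall>a\<in>lab C. \<forall>b\<in>lab C. \<forall>c\<in>lab C. \<forall>e\<in>lab C.
        card {m \<in> lab C. adm C a b m \<and> adm C m c e} = card {n \<in> lab C. adm C b c n \<and> adm C a n e}) \<and>
     \<comment> \<open>quantum dimensions\<close>
     (\<forall>a \<in> lab C. qd C a > 0) \<and> qd C (unit_lab C) = 1 \<and>
     (\<forall>a\<in>lab C. \<forall>b\<in>lab C. qd C a * qd C b = (\<Sum>c \<in> {c \<in> lab C. adm C a b c}. qd C c)) \<and>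
     \<comment> \<open>F-symbols vanish outside admissible configurations\<close>
     (\<forall>a b c e n m. Fsym C a b c e n m \<noteq> 0 \<longrightarrow>
        adm C b c n \<and> adm C a n e \<and> adm C a b m \<and> adm C m c e) \<and>
     \<comment> \<open>unitarity of the F-matrices\<close>
     (\<forall>a\<in>lab C. \<forall>b\<in>lab C. \<forall>c\<in>lab C. \<forall>e\<in>lab C. \<forall>n n'.
        adm C b c n \<and> adm C a n e \<and> adm C b c n' \<and> adm C a n' e \<longrightarrow>
        (\<Sum>m \<in> lab C. Fsym C a b c e n m * cnj (Fsym C a b c e n' m)) = (if n = n' then 1 else 0)) \<and>
     \<comment> \<open>normalization: F-symbols with a trivial upper label are 1 (trivalent vertices with a unit leg are identities)\<close>
     (\<forall>a b c e n m. (a = unit_lab C \<or> b = unit_lab C \<or> c = unit_lab C) \<longrightarrow>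
        adm C b c n \<and> adm C a n e \<and> adm C a b m \<and> adm C m c e \<longrightarrow> Fsym C a b c e n m = 1)"

text \<open>The basis element e^{ab}_{i;cd} is indexed by the tuple (a,b,i,c,d).
Elements of H_C are complex-valued functions on such tuples supported on the basis set.\<close>

type_synonym 'l hidx = "'l \<times> 'l \<times> 'l \<times> 'l \<times> 'l"

definition basisH :: "'l fusion_data \<Rightarrow> 'l hidx set" where
  "basisH C = {(a,b,i,c,d). adm C a i b \<and> adm C i d c}"

definition Hvec :: "'l fusion_data \<Rightarrow> ('l hidx \<Rightarrow> complex) set" where
  "Hvec C = {h. \<forall>x. x \<notin> basisH C \<longrightarrow> h x = 0}"

definition ebas :: "'l hidx \<Rightarrow> 'l hidx \<Rightarrow> complex" where
  "ebas x = (\<lambda>y. if y = x then 1 else 0)"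

definition cscale :: "complex \<Rightarrow> ('a \<Rightarrow> complex) \<Rightarrow> ('a \<Rightarrow> complex)" where
  "cscale c f = (\<lambda>x. c * f x)"

definition sq :: "'l fusion_data \<Rightarrow> 'l \<Rightarrow> complex" where
  "sq C i = complex_of_real (sqrt (qd C i))"

definition Hmult :: "'l fusion_data \<Rightarrow> ('l hidx \<Rightarrow> complex) \<Rightarrow> ('l hidx \<Rightarrow> complex) \<Rightarrow> ('l hidx \<Rightarrow> complex)" where
  "Hmult C h g = (\<lambda>(a,b,i,c',d').
     \<Sum>c\<in>lab C. \<Sum>d\<in>lab C. h (a,b,i,c,d) * g (c,d,i,c',d') / sq C i)"

definition Hunit :: "'l fusion_data \<Rightarrow> 'l hidx \<Rightarrow> complex" where
  "Hunit C = (\<lambda>(a,b,i,c,d). if (a,b,i,c,d) \<in> basisH C \<and> c = a \<and> d = b then sq C i else 0)"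

definition Hcounit :: "'l fusion_data \<Rightarrow> ('l hidx \<Rightarrow> complex) \<Rightarrow> complex" where
  "Hcounit C h = (\<Sum>a\<in>lab C. \<Sum>c\<in>lab C. h (a,a,unit_lab C,c,c))"

text \<open>Comultiplication, as an element of H_C (x) H_C represented by its coefficients
on the tensor basis e_x (x) e_y.\<close>

definition Hcomult :: "'l fusion_data \<Rightarrow> ('l hidx \<Rightarrow> complex) \<Rightarrow> ('l hidx \<times> 'l hidx \<Rightarrow> complex)" where
  "Hcomult C h = (\<lambda>((a,p,j,c,q),(p',b,k,q',d)).
     if (a,p,j,c,q) \<in> basisH C \<and> (p',b,k,q',d) \<in> basisH C \<and> p' = p \<and> q' = q then
       (\<Sum>i\<in>lab C. h (a,b,i,c,d) * sq C j * sq C k / sq C i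
          * Fsym C a j k b i p * Fsym C d k j c i q)
     else 0)"

text \<open>Target counital map eps_t(h) = eps(eta_(1) h) eta_(2).\<close>

definition eps_t :: "'l fusion_data \<Rightarrow> ('l hidx \<Rightarrow> complex) \<Rightarrow> ('l hidx \<Rightarrow> complex)" where
  "eps_t C h = (\<lambda>y. \<Sum>x\<in>basisH C. Hcomult C (Hunit C) (x,y) * Hcounit C (Hmult C (ebas x) h))"

definition Ht :: "'l fusion_data \<Rightarrow> ('l hidx \<Rightarrow> complex) set" where
  "Ht C = eps_t C ` Hvec C"

definition Ht_act :: "'l fusion_data \<Rightarrow> ('l hidx \<Rightarrow> complex) \<Rightarrow> ('l hidx \<Rightarrow> complex) \<Rightarrow> ('l hidx \<Rightarrow> complex)" where
  "Ht_act C h z = eps_t C (Hmult C h z)"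

definition Vmod :: "'l fusion_data \<Rightarrow> 'l \<Rightarrow> ('l \<times> 'l \<Rightarrow> complex) set" where
  "Vmod C i = {v. \<forall>a b. \<not> adm C a i b \<longrightarrow> v (a,b) = 0}"

definition Vact :: "'l fusion_data \<Rightarrow> 'l \<Rightarrow> ('l hidx \<Rightarrow> complex) \<Rightarrow> ('l \<times> 'l \<Rightarrow> complex) \<Rightarrow> ('l \<times> 'l \<Rightarrow> complex)" where
  "Vact C i h v = (\<lambda>(a,b). \<Sum>c\<in>lab C. \<Sum>d\<in>lab C. h (a,b,i,c,d) * v (c,d) / sq C i)"

definition gen :: "'l fusion_data \<Rightarrow> 'l \<Rightarrow> ('l hidx \<Rightarrow> complex)" where
  "gen C a = (\<lambda>(a',b,k,c,e). if a' = a \<and> c = a \<and> e = b \<and> adm C a k b then sq C k / sq C a else 0)"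

end

theory Submission
  imports Defs
begin


context vector_space_pair begin
lemma dim_image_eq':
  assumes lf: "Vector_Spaces.linear s1 s2 f"
    and fi: "inj_on f (vs1.span S)"
  shows "vs2.dim (f ` S) = vs1.dim S"
proof -
  interpret lf: Vector_Spaces.linear s1 s2 f by fact
  obtain B where B: "B \<subseteq> S" "vs1.independent B" "S \<subseteq> vs1.span B" "card B = vs1.dim S"
    using vs1.basis_exists[of S] by auto
  then have "vs1.span S = vs1.span B"
    using vs1.span_mono[of B S] vs1.span_mono[of S "vs1.span B"] vs1.span_span[of B] by auto
  moreover have "card (f ` B) = card B"
    using assms card_image[of f B] inj_on_subset[of f "vs1.span S" B] B vs1.span_superset by auto
  moreover have "(f ` B) \<subseteq> (f ` S)"
    using B by auto
  ultimately show ?thesis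
    by (metis B(2) B(4) fi lf.dependent_inj_imageD lf.span_image vs2.dim_eq_card_independent vs2.dim_span)
qed
end

lemma vs_cscale: "vector_space (cscale :: complex \<Rightarrow> ('a \<Rightarrow> complex) \<Rightarrow> _)"
  by unfold_locales (auto simp: cscale_def fun_eq_iff algebra_simps)

lemma cscale_sum_apply: "(\<Sum>a\<in>A. (f a :: 'x \<Rightarrow> complex)) x = (\<Sum>a\<in>A. f a x)"
  by (induction A rule: infinite_finite_induct) auto



definition TT :: "'l fusion_data \<Rightarrow> ('l \<Rightarrow> complex) \<Rightarrow> ('l hidx \<Rightarrow> complex)" where
  "TT C g = (\<lambda>(p,b,k,q,d). if q = p \<and> d = b \<and> adm C p k b then sq C k * g p else 0)"

definition phi :: "'l fusion_data \<Rightarrow> 'l \<Rightarrow> ('l hidx \<Rightarrow> complex) \<Rightarrow> complex" where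
  "phi C a h = (\<Sum>c\<in>lab C. h (a,a,unit_lab C,c,c))"




definition FF :: "'l fusion_data \<Rightarrow> ('l \<Rightarrow> complex) \<Rightarrow> ('l \<times> 'l \<Rightarrow> complex)" where
  "FF C g = (\<lambda>(a,b). if a = b \<and> a \<in> lab C then g a else 0)"

definition ff :: "'l fusion_data \<Rightarrow> ('l hidx \<Rightarrow> complex) \<Rightarrow> ('l \<times> 'l \<Rightarrow> complex)" where
  "ff C z = (\<lambda>(a,b). if a = b \<and> a \<in> lab C then z (a,a,unit_lab C,a,a) else 0)"

interpretation mH: module "cscale :: complex \<Rightarrow> ('l hidx \<Rightarrow> complex) \<Rightarrow> _"
  using vs_cscale module_iff_vector_space by blast





context fixes C :: "'l fusion_data" assumes umf: "umf_fusion C"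
begin

lemma UU: "finite (lab C) \<and> unit_lab C \<in> lab C \<and>
     (\<forall>a b c. adm C a b c \<longrightarrow> a \<in> lab C \<and> b \<in> lab C \<and> c \<in> lab C) \<and>
     (\<forall>a \<in> lab C. \<forall>b. adm C (unit_lab C) a b \<longleftrightarrow> a = b) \<and>
     (\<forall>a \<in> lab C. \<forall>b. adm C a (unit_lab C) b \<longleftrightarrow> a = b) \<and>
     (\<forall>a b c. adm C a b c \<longleftrightarrow> adm C b a c) \<and>
     (\<forall>a b c. adm C a b c \<longleftrightarrow> adm C a c b) \<and>
     (\<forall>a \<in> lab C. qd C a > 0) \<and> qd C (unit_lab C) = 1 \<and>
     (\<forall>a b c e n m. Fsym C a b c e n m \<noteq> 0 \<longrightarrow>
        adm C b c n \<and> adm C a n e \<and> adm C a b m \<and> adm C m c e) \<and>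
     (\<forall>a b c e n m. (a = unit_lab C \<or> b = unit_lab C \<or> c = unit_lab C) \<longrightarrow>
        adm C b c n \<and> adm C a n e \<and> adm C a b m \<and> adm C m c e \<longrightarrow> Fsym C a b c e n m = 1)"
  using umf unfolding umf_fusion_def by (elim conjE) (intro conjI; assumption)

lemma finL: "finite (lab C)" using UU by (elim conjE) assumption
lemma unitL: "unit_lab C \<in> lab C" using UU by (elim conjE) assumption
lemma admL: "adm C a b c \<Longrightarrow> a \<in> lab C \<and> b \<in> lab C \<and> c \<in> lab C"
proof - have "\<forall>a b c. adm C a b c \<longrightarrow> a \<in> lab C \<and> b \<in> lab C \<and> c \<in> lab C" using UU by (elim conjE) assumption
  thus "adm C a b c \<Longrightarrow> a \<in> lab C \<and> b \<in> lab C \<and> c \<in> lab C" by blast qed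
lemma adm_sym1: "adm C a b c \<longleftrightarrow> adm C b a c"
proof - have "\<forall>a b c. adm C a b c \<longleftrightarrow> adm C b a c" using UU by (elim conjE) assumption
  thus ?thesis by blast qed
lemma adm_sym2: "adm C a b c \<longleftrightarrow> adm C a c b"
proof - have "\<forall>a b c. adm C a b c \<longleftrightarrow> adm C a c b" using UU by (elim conjE) assumption
  thus ?thesis by blast qed
lemma adm_U1: "adm C (unit_lab C) a b \<longleftrightarrow> a = b \<and> a \<in> lab C"
proof - have "\<forall>a \<in> lab C. \<forall>b. adm C (unit_lab C) a b \<longleftrightarrow> a = b" using UU by (elim conjE) assumption
  thus ?thesis using admL by blast qed
lemma adm_U2: "adm C a (unit_lab C) b \<longleftrightarrow> a = b \<and> a \<in> lab C"
  using adm_U1 adm_sym1 by blast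
lemma adm_U3: "adm C a b (unit_lab C) \<longleftrightarrow> a = b \<and> a \<in> lab C"
  using adm_U2 adm_sym2 by blast
lemma qd_pos: "a \<in> lab C \<Longrightarrow> qd C a > 0"
proof - have "\<forall>a \<in> lab C. qd C a > 0" using UU by (elim conjE) assumption
  thus "a \<in> lab C \<Longrightarrow> qd C a > 0" by blast qed
lemma sq_nz: "a \<in> lab C \<Longrightarrow> sq C a \<noteq> 0" using qd_pos by (fastforce simp: sq_def)
lemma sq_U: "sq C (unit_lab C) = 1"
proof - have "qd C (unit_lab C) = 1" using UU by (elim conjE) assumption
  thus ?thesis by (simp add: sq_def) qed
lemma F_nz: "Fsym C a b c e n m \<noteq> 0 \<Longrightarrow> adm C b c n \<and> adm C a n e \<and> adm C a b m \<and> adm C m c e"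
proof - have "\<forall>a b c e n m. Fsym C a b c e n m \<noteq> 0 \<longrightarrow>
        adm C b c n \<and> adm C a n e \<and> adm C a b m \<and> adm C m c e" using UU by (elim conjE) assumption
  thus "Fsym C a b c e n m \<noteq> 0 \<Longrightarrow> adm C b c n \<and> adm C a n e \<and> adm C a b m \<and> adm C m c e" by blast qed
lemma F_one: "(a = unit_lab C \<or> b = unit_lab C \<or> c = unit_lab C) \<Longrightarrow>
        adm C b c n \<Longrightarrow> adm C a n e \<Longrightarrow> adm C a b m \<Longrightarrow> adm C m c e \<Longrightarrow> Fsym C a b c e n m = 1"
proof - have "\<forall>a b c e n m. (a = unit_lab C \<or> b = unit_lab C \<or> c = unit_lab C) \<longrightarrow>
        adm C b c n \<and> adm C a n e \<and> adm C a b m \<and> adm C m c e \<longrightarrow> Fsym C a b c e n m = 1" using UU by (elim conjE) assumption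
  thus "(a = unit_lab C \<or> b = unit_lab C \<or> c = unit_lab C) \<Longrightarrow>
        adm C b c n \<Longrightarrow> adm C a n e \<Longrightarrow> adm C a b m \<Longrightarrow> adm C m c e \<Longrightarrow> Fsym C a b c e n m = 1" by blast qed

lemma double_delta: "finite A \<Longrightarrow> finite B \<Longrightarrow> c \<in> A \<Longrightarrow> d \<in> B \<Longrightarrow>
  (\<Sum>x\<in>A. \<Sum>y\<in>B. if x = c then (if y = d then X else 0) else 0) = (X::complex)"
proof -
  assume fin: "finite A" "finite B" and cd: "c \<in> A" "d \<in> B"
  have "(\<Sum>y\<in>B. if x = c then (if y = d then X else 0) else 0) = (if x = c then X else 0)" for x
    by (cases "x = c") (use fin cd in auto)
  thus ?thesis using fin cd by simp
qed

lemma sum_if_const: "(\<Sum>y\<in>B. if P then G y else 0) = (if P then (\<Sum>y\<in>B. G y) else (0::complex))"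
  by (cases P) auto

lemma finB: "finite (basisH C)"
proof -
  have "basisH C \<subseteq> lab C \<times> lab C \<times> lab C \<times> lab C \<times> lab C"
    by (auto simp: basisH_def dest: admL)
  thus ?thesis using finL by (auto intro: finite_subset)
qed

lemma counit_ebas:
  assumes "(a,b',i,c,d) \<in> basisH C"
  shows "Hcounit C (Hmult C (ebas (a,b',i,c,d)) h) = (if b' = a \<and> i = unit_lab C then phi C c h else 0)"
proof -
  have cd: "c \<in> lab C" "d \<in> lab C" using assms by (auto simp: basisH_def dest: admL)
  have M: "Hmult C (ebas (a,b',i,c,d)) h (a0,b0,i0,c0,d0) =
      (if a0 = a \<and> b0 = b' \<and> i0 = i then h (c,d,i,c0,d0) / sq C i else 0)" for a0 b0 i0 c0 d0
  proof -
    have "Hmult C (ebas (a,b',i,c,d)) h (a0,b0,i0,c0,d0) =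
      (\<Sum>c1\<in>lab C. \<Sum>d1\<in>lab C. (if c1 = c then (if d1 = d then
          (if a0 = a \<and> b0 = b' \<and> i0 = i then h (c,d,i,c0,d0) / sq C i else 0) else 0) else 0))"
      unfolding Hmult_def ebas_def prod.case by (intro sum.cong refl) auto
    also have "\<dots> = (if a0 = a \<and> b0 = b' \<and> i0 = i then h (c,d,i,c0,d0) / sq C i else 0)"
      using double_delta[OF finL finL cd] by simp
    finally show ?thesis .
  qed
  have "Hcounit C (Hmult C (ebas (a,b',i,c,d)) h) = (\<Sum>a0\<in>lab C. \<Sum>c0\<in>lab C.
      (if a0 = a then (if b' = a \<and> i = unit_lab C then h (c,d,unit_lab C,c0,c0) else 0) else 0))"
    unfolding Hcounit_def M by (intro sum.cong refl) (auto simp: sq_U)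
  also have "\<dots> = (if b' = a \<and> i = unit_lab C then (\<Sum>c0\<in>lab C. h (c,d,unit_lab C,c0,c0)) else 0)"
    unfolding sum_if_const using assms finL by (auto simp: basisH_def dest: admL)
  also have "\<dots> = (if b' = a \<and> i = unit_lab C then phi C c h else 0)"
    using assms by (auto simp: basisH_def phi_def adm_U1)
  finally show ?thesis .
qed

lemma comult_unit:
  assumes "a \<in> lab C" "c \<in> lab C"
  shows "Hcomult C (Hunit C) ((a,a,unit_lab C,c,c),(p,b,k,q,d)) =
    (if p = a \<and> q = c \<and> c = a \<and> d = b \<and> adm C a k b then sq C k else 0)"
proof (cases "p = a \<and> q = c \<and> c = a \<and> d = b \<and> adm C a k b")
  case True
  hence eqs: "p = a" "q = a" "c = a" "d = b" and akb: "adm C a k b" by auto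
  have kL: "k \<in> lab C" using akb admL by blast
  have bas1: "(a,a,unit_lab C,a,a) \<in> basisH C" using assms by (auto simp: basisH_def adm_U1 adm_U2)
  have bas2: "(a,b,k,a,b) \<in> basisH C" using akb by (auto simp: basisH_def adm_sym1 adm_sym2)
  have "Hcomult C (Hunit C) ((a,a,unit_lab C,c,c),(p,b,k,q,d)) =
     (\<Sum>i\<in>lab C. Hunit C (a,b,i,a,b) * sq C (unit_lab C) * sq C k / sq C i
          * Fsym C a (unit_lab C) k b i a * Fsym C b k (unit_lab C) a i a)"
    using bas1 bas2 eqs unfolding Hcomult_def by simp
  also have "\<dots> = (\<Sum>i\<in>lab C. if i = k then sq C k else 0)"
  proof (intro sum.cong refl)
    fix i assume iL: "i \<in> lab C"
    show "Hunit C (a,b,i,a,b) * sq C (unit_lab C) * sq C k / sq C i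
          * Fsym C a (unit_lab C) k b i a * Fsym C b k (unit_lab C) a i a = (if i = k then sq C k else 0)"
    proof (cases "i = k")
      case True
      have "Fsym C a (unit_lab C) k b k a = 1"
        by (rule F_one) (use akb kL assms in \<open>auto simp: adm_U1 adm_U2\<close>)
      moreover have "Fsym C b k (unit_lab C) a k a = 1"
        by (rule F_one) (use akb kL assms in \<open>auto simp: adm_U1 adm_U2 adm_U3 intro: iffD1[OF adm_sym1] iffD1[OF adm_sym2]\<close>)
      moreover have "Hunit C (a,b,k,a,b) = sq C k" using bas2 by (simp add: Hunit_def)
      ultimately show ?thesis using True sq_nz[OF kL] by (simp add: sq_U)
    next
      case False
      have "Fsym C a (unit_lab C) k b i a = 0"
        using False F_nz[of a "unit_lab C" k b i a] by (auto simp: adm_U1)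
      thus ?thesis using False by simp
    qed
  qed
  also have "\<dots> = sq C k" using finL kL by simp
  finally show ?thesis using True by simp
next
  case False
  have "(\<Sum>i\<in>lab C. Hunit C (a,b,i,c,d) * sq C (unit_lab C) * sq C k / sq C i
          * Fsym C a (unit_lab C) k b i p * Fsym C d k (unit_lab C) c i q) = 0"
    if "p = a" "q = c" "(p,b,k,q,d) \<in> basisH C"
  proof (intro sum.neutral ballI)
    fix i assume "i \<in> lab C"
    show "Hunit C (a,b,i,c,d) * sq C (unit_lab C) * sq C k / sq C i
          * Fsym C a (unit_lab C) k b i p * Fsym C d k (unit_lab C) c i q = 0"
    proof (cases "c = a \<and> d = b")
      case True
      hence "\<not> adm C a k b" using False that by auto
      thus ?thesis using that by (auto simp: basisH_def)
    next
      case False thus ?thesis by (auto simp: Hunit_def)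
    qed
  qed
  thus ?thesis using False unfolding Hcomult_def by auto
qed

lemma eps_t_TT: "eps_t C h = TT C (\<lambda>p. phi C p h)"
proof
  fix y :: "'l hidx"
  obtain p b k q d where y: "y = (p,b,k,q,d)" by (cases y) auto
  have "eps_t C h y = (\<Sum>x\<in>basisH C. if x = (p,p,unit_lab C,p,p) then
      (if q = p \<and> d = b \<and> adm C p k b then sq C k * phi C p h else 0) else 0)"
    unfolding eps_t_def
  proof (intro sum.cong refl)
    fix x assume xb: "x \<in> basisH C"
    obtain a b' i c d' where x: "x = (a,b',i,c,d')" by (cases x) auto
    have aL: "a \<in> lab C" "c \<in> lab C" using xb x by (auto simp: basisH_def dest: admL)
    show "Hcomult C (Hunit C) (x, y) * Hcounit C (Hmult C (ebas x) h) =
       (if x = (p,p,unit_lab C,p,p) then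
      (if q = p \<and> d = b \<and> adm C p k b then sq C k * phi C p h else 0) else 0)"
    proof (cases "b' = a \<and> i = unit_lab C")
      case True
      hence "d' = c" using xb x by (auto simp: basisH_def adm_U1)
      hence xx: "x = (a,a,unit_lab C,c,c)" using True x by simp
      have c1: "Hcounit C (Hmult C (ebas x) h) = phi C c h"
        using counit_ebas[of a a "unit_lab C" c c h] xb xx by simp
      have c2: "Hcomult C (Hunit C) (x, y) = (if p = a \<and> q = c \<and> c = a \<and> d = b \<and> adm C a k b then sq C k else 0)"
        unfolding xx y by (rule comult_unit[OF aL])
      have eq: "(if p = a \<and> q = c \<and> c = a \<and> d = b \<and> adm C a k b then sq C k else 0) * phi C c h =
         (if (a,a,unit_lab C,c,c) = (p,p,unit_lab C,p,p) then
      (if q = p \<and> d = b \<and> adm C p k b then sq C k * phi C p h else 0) else 0)"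
      proof (cases "p = a \<and> q = c \<and> c = a \<and> d = b \<and> adm C a k b")
        case True
        then show ?thesis by (elim conjE) simp
      next
        case False
        then have "\<not> ((a,a,unit_lab C,c,c) = (p,p,unit_lab C,p,p) \<and> q = p \<and> d = b \<and> adm C p k b)" by auto
        then show ?thesis using False by (simp only: if_False if_True mult_zero_left) (simp only: if_split; blast)
      qed
      show ?thesis unfolding c1 c2 using eq xx by simp
    next
      case False
      have "Hcounit C (Hmult C (ebas x) h) = 0" using counit_ebas[of a b' i c d' h] xb x False by simp
      moreover have "x \<noteq> (p,p,unit_lab C,p,p)" using x False by auto
      ultimately show ?thesis by simp
    qed
  qed
  also have "\<dots> = (if q = p \<and> d = b \<and> adm C p k b then sq C k * phi C p h else 0)"
  proof (cases "q = p \<and> d = b \<and> adm C p k b")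
    case True
    hence "(p,p,unit_lab C,p,p) \<in> basisH C" by (auto simp: basisH_def adm_U1 adm_U2 dest: admL)
    thus ?thesis using True by (subst sum.delta[OF finB]) simp
  next
    case False
    hence "(q = p \<and> d = b \<and> adm C p k b) = False" by blast
    thus ?thesis by (simp only: if_False if_cancel sum.neutral_const)
  qed
  also have "\<dots> = TT C (\<lambda>p. phi C p h) y" by (simp add: TT_def y)
  finally show "eps_t C h y = TT C (\<lambda>p. phi C p h) y" .
qed


lemma TT_cong: "(\<And>p. p \<in> lab C \<Longrightarrow> g p = g' p) \<Longrightarrow> TT C g = TT C g'"
  unfolding TT_def by (auto simp: fun_eq_iff dest: admL)

lemma TT_at: "a \<in> lab C \<Longrightarrow> TT C g (a,a,unit_lab C,a,a) = g a"
  by (simp add: TT_def adm_U2 sq_U)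

lemma TT_add: "TT C g + TT C g' = TT C (\<lambda>p. g p + g' p)"
  unfolding TT_def by (auto simp: fun_eq_iff algebra_simps)
lemma TT_scale: "cscale c (TT C g) = TT C (\<lambda>p. c * g p)"
  unfolding TT_def cscale_def by (auto simp: fun_eq_iff algebra_simps)
lemma TT_zero: "TT C (\<lambda>p. 0) = 0"
  unfolding TT_def by (auto simp: fun_eq_iff)

lemma TT_sum: "(\<Sum>b\<in>B. cscale (w b) (TT C (g b))) = TT C (\<lambda>p. \<Sum>b\<in>B. w b * g b p)"
proof (induction B rule: infinite_finite_induct)
  case (infinite A) then show ?case by (simp add: TT_zero)
next
  case empty then show ?case by (simp add: TT_zero)
next
  case (insert x F) then show ?case by (simp add: TT_add TT_scale algebra_simps)
qed

lemma Ht_eq: "Ht C = range (TT C)"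
proof
  show "Ht C \<subseteq> range (TT C)" unfolding Ht_def using eps_t_TT by auto
next
  show "range (TT C) \<subseteq> Ht C"
  proof
    fix z assume "z \<in> range (TT C)"
    then obtain g where z: "z = TT C g" by auto
    define h where "h = (\<lambda>(a,b,i,c,d). if a = b \<and> b = c \<and> c = d \<and> i = unit_lab C \<and> a \<in> lab C then g a else 0)"
    have "h \<in> Hvec C" unfolding Hvec_def h_def basisH_def by (auto simp: adm_U1 adm_U2)
    moreover have "phi C p h = g p" if "p \<in> lab C" for p
    proof -
      have "phi C p h = (\<Sum>c\<in>lab C. if c = p then g p else 0)"
        unfolding phi_def h_def using that by (intro sum.cong refl) auto
      thus ?thesis using that finL by simp
    qed
    ultimately have "eps_t C h = z" unfolding eps_t_TT z by (intro TT_cong) auto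
    thus "z \<in> Ht C" unfolding Ht_def using \<open>h \<in> Hvec C\<close> by blast
  qed
qed

lemma gen_TT: "gen C a = TT C (\<lambda>p. if p = a then 1 / sq C a else 0)"
  unfolding gen_def TT_def by (auto simp: fun_eq_iff)

lemma TT_subspace: "mH.subspace (range (TT C))"
proof (rule mH.subspaceI)
  have "TT C (\<lambda>p. 0) \<in> range (TT C)" by blast
  thus "0 \<in> range (TT C)" unfolding TT_zero .
  show "x + y \<in> range (TT C)" if "x \<in> range (TT C)" "y \<in> range (TT C)" for x y
    using that TT_add by auto
  show "cscale c x \<in> range (TT C)" if "x \<in> range (TT C)" for c x
    using that TT_scale by auto
qed

lemma span_eq: "mH.span (gen C ` lab C) = range (TT C)"
proof
  show "mH.span (gen C ` lab C) \<subseteq> range (TT C)"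
    by (rule mH.span_minimal) (use TT_subspace gen_TT in auto)
next
  show "range (TT C) \<subseteq> mH.span (gen C ` lab C)"
  proof
    fix z assume "z \<in> range (TT C)"
    then obtain g where z: "z = TT C g" by auto
    have "(\<Sum>a\<in>lab C. cscale (g a * sq C a) (gen C a)) = TT C g"
      unfolding gen_TT TT_sum
    proof (rule TT_cong)
      fix p assume p: "p \<in> lab C"
      have "(\<Sum>a\<in>lab C. g a * sq C a * (if p = a then 1 / sq C a else 0)) =
            (\<Sum>a\<in>lab C. if a = p then g p else 0)"
        using sq_nz[OF p] by (intro sum.cong refl) auto
      thus "(\<Sum>a\<in>lab C. g a * sq C a * (if p = a then 1 / sq C a else 0)) = g p"
        using p finL by simp
    qed
    moreover have "(\<Sum>a\<in>lab C. cscale (g a * sq C a) (gen C a)) \<in> mH.span (gen C ` lab C)"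
      by (intro mH.span_sum mH.span_scale mH.span_base) auto
    ultimately show "z \<in> mH.span (gen C ` lab C)" using z by simp
  qed
qed


lemma ff_TT: "ff C (TT C g) = FF C g"
  unfolding ff_def FF_def by (auto simp: fun_eq_iff TT_at)

lemma Vmod_eq: "Vmod C (unit_lab C) = range (FF C)"
proof
  show "Vmod C (unit_lab C) \<subseteq> range (FF C)"
  proof
    fix v assume v: "v \<in> Vmod C (unit_lab C)"
    have "v = FF C (\<lambda>a. v (a,a))"
      using v unfolding Vmod_def FF_def by (auto simp: fun_eq_iff adm_U2)
    thus "v \<in> range (FF C)" by blast
  qed
next
  show "range (FF C) \<subseteq> Vmod C (unit_lab C)"
    unfolding Vmod_def FF_def by (auto simp: adm_U2)
qed

lemma ff_linear: "Vector_Spaces.linear cscale cscale (ff C)"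
proof -
  have "ff C (x + y) = ff C x + ff C y" for x y
  proof
    fix ab :: "'l \<times> 'l" show "ff C (x + y) ab = (ff C x + ff C y) ab"
      by (cases ab) (auto simp: ff_def)
  qed
  moreover have "ff C (cscale c x) = cscale c (ff C x)" for c x
  proof
    fix ab :: "'l \<times> 'l" show "ff C (cscale c x) ab = cscale c (ff C x) ab"
      by (cases ab) (auto simp: ff_def cscale_def)
  qed
  ultimately show ?thesis unfolding Vector_Spaces.linear_iff using vs_cscale vs_cscale by blast
qed

lemma ff_bij: "bij_betw (ff C) (Ht C) (Vmod C (unit_lab C))"
proof (unfold bij_betw_def, intro conjI)
  show "inj_on (ff C) (Ht C)"
  proof (rule inj_onI)
    fix x y assume "x \<in> Ht C" "y \<in> Ht C" and e: "ff C x = ff C y"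
    then obtain g g' where x: "x = TT C g" and y: "y = TT C g'" using Ht_eq by auto
    have "FF C g = FF C g'" using e unfolding x y ff_TT .
    hence "g p = g' p" if "p \<in> lab C" for p
    proof -
      have "FF C g (p,p) = FF C g' (p,p)" using \<open>FF C g = FF C g'\<close> by simp
      thus ?thesis using that by (simp add: FF_def)
    qed
    thus "x = y" unfolding x y by (intro TT_cong) auto
  qed
  show "ff C ` Ht C = Vmod C (unit_lab C)"
    unfolding Ht_eq Vmod_eq image_image ff_TT by simp
qed

lemma phi_mult: "phi C p (Hmult C h (TT C g)) = (\<Sum>c\<in>lab C. h (p,p,unit_lab C,c,c) * g c)"
proof -
  have "phi C p (Hmult C h (TT C g)) = (\<Sum>c\<in>lab C. \<Sum>c0\<in>lab C. \<Sum>d0\<in>lab C.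
      (if c0 = c then (if d0 = c then h (p,p,unit_lab C,c,c) * g c else 0) else 0))"
    unfolding phi_def Hmult_def prod.case
  proof (intro sum.cong refl)
    fix c c0 d0 assume c: "c \<in> lab C"
    show "h (p, p, unit_lab C, c0, d0) * TT C g (c0, d0, unit_lab C, c, c) / sq C (unit_lab C) =
      (if c0 = c then (if d0 = c then h (p,p,unit_lab C,c,c) * g c else 0) else 0)"
      unfolding TT_def using c by (auto simp: sq_U adm_U2)
  qed
  also have "\<dots> = (\<Sum>c\<in>lab C. h (p,p,unit_lab C,c,c) * g c)"
    by (intro sum.cong refl double_delta finL) auto
  finally show ?thesis .
qed

lemma Ht_act_TT: "Ht_act C h (TT C g) = TT C (\<lambda>p. \<Sum>c\<in>lab C. h (p,p,unit_lab C,c,c) * g c)"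
  unfolding Ht_act_def eps_t_TT phi_mult ..

lemma intertw: "h \<in> Hvec C \<Longrightarrow> z \<in> Ht C \<Longrightarrow> ff C (Ht_act C h z) = Vact C (unit_lab C) h (ff C z)"
proof -
  assume h: "h \<in> Hvec C" and "z \<in> Ht C"
  then obtain g where z: "z = TT C g" using Ht_eq by auto
  show ?thesis unfolding z Ht_act_TT ff_TT
  proof
    fix y :: "'l \<times> 'l"
    obtain a b where y: "y = (a,b)" by (cases y) auto
    have "Vact C (unit_lab C) h (FF C g) (a,b) = (\<Sum>c\<in>lab C. \<Sum>d\<in>lab C.
           if d = c then h (a,b,unit_lab C,c,c) * g c else 0)"
      unfolding Vact_def prod.case FF_def by (intro sum.cong refl) (auto simp: sq_U)
    also have "\<dots> = (\<Sum>c\<in>lab C. h (a,b,unit_lab C,c,c) * g c)"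
      using finL by (intro sum.cong refl) auto
    also have "\<dots> = FF C (\<lambda>p. \<Sum>c\<in>lab C. h (p,p,unit_lab C,c,c) * g c) (a,b)"
    proof (cases "a = b \<and> a \<in> lab C")
      case True thus ?thesis by (auto simp: FF_def)
    next
      case False
      hence "(a,b,unit_lab C,c,c) \<notin> basisH C" for c by (auto simp: basisH_def adm_U2)
      hence "h (a,b,unit_lab C,c,c) = 0" for c
        using h unfolding Hvec_def by blast
      thus ?thesis using False by (auto simp: FF_def)
    qed
    finally show "FF C (\<lambda>p. \<Sum>c\<in>lab C. h (p,p,unit_lab C,c,c) * g c) y =
        Vact C (unit_lab C) h (FF C g) y" unfolding y by simp
  qed
qed


lemma simple:
  assumes W: "mH.subspace W" "W \<subseteq> Ht C" and inv: "\<forall>h\<in>Hvec C. \<forall>z\<in>W. Ht_act C h z \<in> W"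
  shows "W = {0} \<or> W = Ht C"
proof (cases "W = {0}")
  case False
  have "0 \<in> W" using W mH.subspace_0 by blast
  with False obtain z where zW: "z \<in> W" and z0: "z \<noteq> 0" by blast
  obtain g where z: "z = TT C g" using zW W Ht_eq by auto
  obtain a where aL: "a \<in> lab C" and ga: "g a \<noteq> 0"
  proof (rule ccontr)
    assume "\<not> thesis"
    with that have "\<forall>a\<in>lab C. g a = 0" by blast
    hence "TT C g = TT C (\<lambda>p. 0)" by (intro TT_cong) auto
    thus False using z z0 TT_zero by simp
  qed
  have eb: "TT C (\<lambda>p. if p = b then g a else 0) \<in> W" if bL: "b \<in> lab C" for b
  proof -
    have hv: "ebas (b,b,unit_lab C,a,a) \<in> Hvec C"
      using aL bL by (auto simp: Hvec_def ebas_def basisH_def adm_U1 adm_U2)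
    have "Ht_act C (ebas (b,b,unit_lab C,a,a)) z = TT C (\<lambda>p. if p = b then g a else 0)"
      unfolding z Ht_act_TT
    proof (rule TT_cong)
      fix p assume "p \<in> lab C"
      have "(\<Sum>c\<in>lab C. ebas (b,b,unit_lab C,a,a) (p,p,unit_lab C,c,c) * g c) =
            (\<Sum>c\<in>lab C. if c = a then (if p = b then g a else 0) else 0)"
        by (intro sum.cong refl) (auto simp: ebas_def)
      thus "(\<Sum>c\<in>lab C. ebas (b,b,unit_lab C,a,a) (p,p,unit_lab C,c,c) * g c) =
            (if p = b then g a else 0)" using aL finL by simp
    qed
    thus ?thesis using inv hv zW by metis
  qed
  have "Ht C \<subseteq> W"
  proof
    fix w assume "w \<in> Ht C"
    then obtain g' where w: "w = TT C g'" using Ht_eq by auto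
    have "(\<Sum>b\<in>lab C. cscale (g' b / g a) (TT C (\<lambda>p. if p = b then g a else 0))) = w"
      unfolding TT_sum w
    proof (rule TT_cong)
      fix p assume p: "p \<in> lab C"
      have "(\<Sum>b\<in>lab C. g' b / g a * (if p = b then g a else 0)) = (\<Sum>b\<in>lab C. if b = p then g' p else 0)"
        using ga by (intro sum.cong refl) auto
      thus "(\<Sum>b\<in>lab C. g' b / g a * (if p = b then g a else 0)) = g' p" using p finL by simp
    qed
    moreover have "(\<Sum>b\<in>lab C. cscale (g' b / g a) (TT C (\<lambda>p. if p = b then g a else 0))) \<in> W"
      by (intro mH.subspace_sum[OF W(1)] mH.subspace_scale[OF W(1)] eb)
    ultimately show "w \<in> W" by simp
  qed
  thus ?thesis using W by blast
qed simp

lemma Ht_nz: "Ht C \<noteq> {0}"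
proof
  assume H: "Ht C = {0}"
  have "TT C (\<lambda>p. 1) \<in> Ht C" using Ht_eq by auto
  hence "TT C (\<lambda>p. 1) = 0" using H by auto
  hence "TT C (\<lambda>p. 1) (unit_lab C,unit_lab C,unit_lab C,unit_lab C,unit_lab C) = 0" by simp
  thus False using TT_at[OF unitL] by simp
qed

end





theorem mainTheorem8:
  fixes C :: "'l fusion_data"
  assumes "umf_fusion C"
  shows "Ht C = module.span cscale (gen C ` lab C) \<and>
         vector_space.dim cscale (Ht C) = vector_space.dim cscale (Vmod C (unit_lab C)) \<and>
         (\<exists>f. Vector_Spaces.linear cscale cscale f \<and> bij_betw f (Ht C) (Vmod C (unit_lab C)) \<and>
           (\<forall>h\<in>Hvec C. \<forall>z\<in>Ht C. f (Ht_act C h z) = Vact C (unit_lab C) h (f z))) \<and>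
         Ht C \<noteq> {0} \<and>
         (\<forall>W. module.subspace cscale W \<longrightarrow> W \<subseteq> Ht C \<longrightarrow>
              (\<forall>h\<in>Hvec C. \<forall>z\<in>W. Ht_act C h z \<in> W) \<longrightarrow> W = {0} \<or> W = Ht C)"
proof (intro conjI)
  note umf = assms
  show span: "Ht C = module.span cscale (gen C ` lab C)"
    using Ht_eq[OF umf] span_eq[OF umf] by simp
  interpret vp: vector_space_pair "cscale :: complex \<Rightarrow> ('l hidx \<Rightarrow> complex) \<Rightarrow> _"
      "cscale :: complex \<Rightarrow> ('l \<times> 'l \<Rightarrow> complex) \<Rightarrow> _"
    by (intro vector_space_pair.intro vs_cscale)
  have sub: "module.subspace cscale (Ht C)" using Ht_eq[OF umf] TT_subspace[OF umf] by simp
  have "vector_space.dim cscale (ff C ` Ht C) = vector_space.dim cscale (Ht C)"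
  proof (rule vp.dim_image_eq'[OF ff_linear[OF umf]])
    have spn: "module.span cscale (Ht C) = Ht C" by (rule mH.span_eq_iff[THEN iffD2, OF sub])
    show "inj_on (ff C) (module.span cscale (Ht C))"
      unfolding spn using ff_bij[OF umf] unfolding bij_betw_def by blast
  qed
  thus "vector_space.dim cscale (Ht C) = vector_space.dim cscale (Vmod C (unit_lab C))"
    using ff_bij[OF umf] unfolding bij_betw_def by simp
  show "\<exists>f. Vector_Spaces.linear cscale cscale f \<and> bij_betw f (Ht C) (Vmod C (unit_lab C)) \<and>
           (\<forall>h\<in>Hvec C. \<forall>z\<in>Ht C. f (Ht_act C h z) = Vact C (unit_lab C) h (f z))"
    using ff_linear[OF umf] ff_bij[OF umf] intertw[OF umf] by blast
  show "Ht C \<noteq> {0}" by (rule Ht_nz[OF umf])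
  show "\<forall>W. module.subspace cscale W \<longrightarrow> W \<subseteq> Ht C \<longrightarrow>
              (\<forall>h\<in>Hvec C. \<forall>z\<in>W. Ht_act C h z \<in> W) \<longrightarrow> W = {0} \<or> W = Ht C"
    using simple[OF umf] by blast
qed

end
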